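(* For a loss $\rho$ and prior $\pi$ on $\mathbb R$ such that the M-posterior has finite variance, for every $\tau\in(0,1)$, $\varepsilon^*(T_\tau,X^n)\ge\varepsilon^*_{W_2}(\pi_n^\rho,X^n)$.
   Context: Location M-posterior: for $Y=(y_1,\dots,y_n)\in\mathbb R^n$, $\pi_n^\rho(\theta\mid Y)\propto\pi(\theta)\exp(-\sum_i\rho(y_i-\theta))$; posterior left $\tau$-quantile $T_\tau(Y)=\inf\{\theta:\int_{-\infty}^\theta\pi_n^\rho(\theta'\mid Y)d\theta'\ge\tau\}$. $\mathcal B(X^n,m)$: samples differing from $X^n$ in at most $m$ entries. Posterior breakdown point $\varepsilon^*_{W_2}(\pi_n^\rho,X^n)=\min\{m/n:\sup_{Y\in\mathcal B(X^n,m)}W_2(\pi_n^\rho(\cdot\mid Y),\pi_n^\rho(\cdot\mid X^n))=\infty\}$ ($W_2$ the 2-Wasserstein distance). Finite-sample breakdown point of a statistic $T$: $\varepsilon^*(T,X^n)=\min\{m/n:\sup_{Y\in\mathcal B(X^n,m)}|T(Y)-T(X^n)|=\infty\}$. *)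

theory Defs
  imports "HOL-Probability.Probability"
begin

definition mpost_dens :: "(real \<Rightarrow> real) \<Rightarrow> (real \<Rightarrow> real) \<Rightarrow> real list \<Rightarrow> real \<Rightarrow> real" where
  "mpost_dens \<rho> \<pi> Y \<theta> = \<pi> \<theta> * exp (- (\<Sum>y\<leftarrow>Y. \<rho> (y - \<theta>)))"

definition mpost_norm :: "(real \<Rightarrow> real) \<Rightarrow> (real \<Rightarrow> real) \<Rightarrow> real list \<Rightarrow> ennreal" where
  "mpost_norm \<rho> \<pi> Y = (\<integral>\<^sup>+ \<theta>. ennreal (mpost_dens \<rho> \<pi> Y \<theta>) \<partial>lborel)"

definition mpost :: "(real \<Rightarrow> real) \<Rightarrow> (real \<Rightarrow> real) \<Rightarrow> real list \<Rightarrow> real measure" where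
  "mpost \<rho> \<pi> Y = density lborel
     (\<lambda>\<theta>. ennreal (mpost_dens \<rho> \<pi> Y \<theta> / enn2real (mpost_norm \<rho> \<pi> Y)))"

definition post_quantile :: "(real \<Rightarrow> real) \<Rightarrow> (real \<Rightarrow> real) \<Rightarrow> real \<Rightarrow> real list \<Rightarrow> real" where
  "post_quantile \<rho> \<pi> \<tau> Y = Inf {\<theta>. measure (mpost \<rho> \<pi> Y) {..\<theta>} \<ge> \<tau>}"

definition contam :: "real list \<Rightarrow> nat \<Rightarrow> real list set" where
  "contam X m = {Y. length Y = length X \<and> card {i. i < length X \<and> Y ! i \<noteq> X ! i} \<le> m}"

definition couplings :: "real measure \<Rightarrow> real measure \<Rightarrow> (real \<times> real) measure set" where
  "couplings \<mu> \<nu> = {\<gamma>. sets \<gamma> = sets (borel \<Otimes>\<^sub>M borel) \<and> prob_space \<gamma>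
       \<and> distr \<gamma> borel fst = \<mu> \<and> distr \<gamma> borel snd = \<nu>}"

definition W2sq :: "real measure \<Rightarrow> real measure \<Rightarrow> ennreal" where
  "W2sq \<mu> \<nu> = (INF \<gamma>\<in>couplings \<mu> \<nu>. \<integral>\<^sup>+ z. ennreal ((fst z - snd z)\<^sup>2) \<partial>\<gamma>)"

definition W2 :: "real measure \<Rightarrow> real measure \<Rightarrow> ennreal" where
  "W2 \<mu> \<nu> = (if W2sq \<mu> \<nu> = \<top> then \<top> else ennreal (sqrt (enn2real (W2sq \<mu> \<nu>))))"

text \<open>Finite-sample breakdown point of a statistic (Inf of empty set = infinity).\<close>
definition breakdown :: "(real list \<Rightarrow> real) \<Rightarrow> real list \<Rightarrow> ereal" where
  "breakdown T X = Inf {ereal (real m / real (length X)) | m. m \<le> length X \<and>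
      (SUP Y\<in>contam X m. ereal \<bar>T Y - T X\<bar>) = \<infinity>}"

definition post_breakdown_W2 :: "(real \<Rightarrow> real) \<Rightarrow> (real \<Rightarrow> real) \<Rightarrow> real list \<Rightarrow> ereal" where
  "post_breakdown_W2 \<rho> \<pi> X = Inf {ereal (real m / real (length X)) | m. m \<le> length X \<and>
      (SUP Y\<in>contam X m. W2 (mpost \<rho> \<pi> Y) (mpost \<rho> \<pi> X)) = \<top>}"

end

theory Submission
  imports Defs
begin

lemma coupling_facts:
  assumes g: "\<gamma> \<in> couplings \<mu> \<nu>"
    and E: "(\<integral>\<^sup>+ z. ennreal ((fst z - snd z)\<^sup>2) \<partial>\<gamma>) \<le> ennreal E"
    and t: "t > 0" and E0: "E \<ge> 0"
  shows "measure \<mu> {..c+t} \<ge> measure \<nu> {..c} - E / t\<^sup>2"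
    and "measure \<mu> {..a-t} \<le> measure \<nu> {..a} + E / t\<^sup>2"
proof -
  have sg: "sets \<gamma> = sets (borel \<Otimes>\<^sub>M borel)" and P: "prob_space \<gamma>"
    and d1: "distr \<gamma> borel fst = \<mu>" and d2: "distr \<gamma> borel snd = \<nu>"
    using g by (auto simp: couplings_def)
  interpret P: prob_space \<gamma> by (rule P)
  have sp: "space \<gamma> = UNIV" using sets_eq_imp_space_eq[OF sg] by (simp add: space_pair_measure)
  have mf: "fst \<in> measurable \<gamma> borel" by (simp add: measurable_cong_sets[OF sg refl])
  have ms: "snd \<in> measurable \<gamma> borel" by (simp add: measurable_cong_sets[OF sg refl])
  have mu: "measure \<mu> {..x} = measure \<gamma> {z. fst z \<le> x}" for x
    unfolding d1[symmetric] by (subst measure_distr[OF mf]) (auto simp: sp vimage_def)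
  have nu: "measure \<nu> {..x} = measure \<gamma> {z. snd z \<le> x}" for x
    unfolding d2[symmetric] by (subst measure_distr[OF ms]) (auto simp: sp vimage_def)
  define S where "S = {z::real\<times>real. t < \<bar>fst z - snd z\<bar>}"
  have sets_pred: "{z::real\<times>real. Q z} \<in> sets \<gamma>" if "Measurable.pred (borel \<Otimes>\<^sub>M borel) Q" for Q
    using that unfolding sg Measurable.pred_def by (simp add: space_pair_measure)
  have Ss: "S \<in> sets \<gamma>" unfolding S_def by (rule sets_pred) measurable
  have fs: "{z::real\<times>real. fst z \<le> x} \<in> sets \<gamma>" for x by (rule sets_pred) measurable
  have ss: "{z::real\<times>real. snd z \<le> x} \<in> sets \<gamma>" for x by (rule sets_pred) measurable
  have "ennreal (t\<^sup>2) * emeasure \<gamma> S = (\<integral>\<^sup>+ z. ennreal (t\<^sup>2) * indicator S z \<partial>\<gamma>)"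
    by (rule nn_integral_cmult_indicator[OF Ss, symmetric])
  also have "\<dots> \<le> (\<integral>\<^sup>+ z. ennreal ((fst z - snd z)\<^sup>2) \<partial>\<gamma>)"
  proof (rule nn_integral_mono)
    fix z :: "real \<times> real"
    show "ennreal (t\<^sup>2) * indicator S z \<le> ennreal ((fst z - snd z)\<^sup>2)"
    proof (cases "z \<in> S")
      case True
      then have "t < \<bar>fst z - snd z\<bar>" by (simp add: S_def)
      then have "t\<^sup>2 \<le> (fst z - snd z)\<^sup>2" using t
        by (metis abs_le_square_iff abs_of_pos less_imp_le)
      then show ?thesis using True by (simp add: ennreal_leI)
    qed simp
  qed
  also have "\<dots> \<le> ennreal E" by (rule E)
  finally have "ennreal (t\<^sup>2 * measure \<gamma> S) \<le> ennreal E"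
    by (simp add: P.emeasure_eq_measure ennreal_mult'')
  then have "t\<^sup>2 * measure \<gamma> S \<le> E" using E0 by simp
  then have MS: "measure \<gamma> S \<le> E / t\<^sup>2" using t by (simp add: field_simps)
  have "measure \<gamma> {z. snd z \<le> c} \<le> measure \<gamma> ({z. fst z \<le> c+t} \<union> S)"
    by (rule P.finite_measure_mono) (auto simp: S_def intro!: sets.Un fs Ss[unfolded S_def])
  also have "\<dots> \<le> measure \<gamma> {z. fst z \<le> c+t} + measure \<gamma> S"
    by (rule measure_subadditive[OF fs Ss]) (simp_all add: P.emeasure_eq_measure)
  finally show "measure \<mu> {..c+t} \<ge> measure \<nu> {..c} - E / t\<^sup>2" using MS by (simp add: mu nu)
  have "measure \<gamma> {z. fst z \<le> a-t} \<le> measure \<gamma> ({z. snd z \<le> a} \<union> S)"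
    by (rule P.finite_measure_mono) (auto simp: S_def intro!: sets.Un ss Ss[unfolded S_def])
  also have "\<dots> \<le> measure \<gamma> {z. snd z \<le> a} + measure \<gamma> S"
    by (rule measure_subadditive[OF ss Ss]) (simp_all add: P.emeasure_eq_measure)
  finally show "measure \<mu> {..a-t} \<le> measure \<nu> {..a} + E / t\<^sup>2" using MS by (simp add: mu nu)
qed


lemma quant_in:
  fixes \<mu> :: "real measure" and a c \<tau> :: real
  assumes "prob_space \<mu>" "sets \<mu> = sets borel"
    and a: "measure \<mu> {..a} < \<tau>" and c: "\<tau> \<le> measure \<mu> {..c}"
  shows "a \<le> Inf {\<theta>. \<tau> \<le> measure \<mu> {..\<theta>}}" "Inf {\<theta>. \<tau> \<le> measure \<mu> {..\<theta>}} \<le> c"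
proof -
  interpret prob_space \<mu> by fact
  have lb: "a < \<theta>" if "\<tau> \<le> measure \<mu> {..\<theta>}" for \<theta>
  proof (rule ccontr)
    assume "\<not> a < \<theta>"
    then have "measure \<mu> {..\<theta>} \<le> measure \<mu> {..a}"
      using \<open>\<not> a < \<theta>\<close> by (intro finite_measure_mono) (auto simp: assms(2))
    then show False using that a by simp
  qed
  show "a \<le> Inf {\<theta>. \<tau> \<le> measure \<mu> {..\<theta>}}"
    by (rule cInf_greatest) (use c lb in \<open>auto intro: less_imp_le\<close>)
  show "Inf {\<theta>. \<tau> \<le> measure \<mu> {..\<theta>}} \<le> c"
    by (rule cInf_lower) (use c lb in \<open>auto simp: bdd_below_def intro: less_imp_le\<close>)
qed

lemma dens_meas:
  assumes "\<rho> \<in> borel_measurable borel" "\<pi> \<in> borel_measurable borel"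
  shows "mpost_dens \<rho> \<pi> Y \<in> borel_measurable borel"
proof -
  have "(\<lambda>\<theta>. \<Sum>y\<leftarrow>Y. \<rho> (y - \<theta>)) \<in> borel_measurable borel"
  proof (induction Y)
    case (Cons y Y)
    have "(\<lambda>\<theta>. \<rho> (y - \<theta>)) \<in> borel_measurable borel"
      by (rule measurable_compose[OF _ assms(1)]) simp
    then show ?case using Cons by simp
  qed simp
  then show ?thesis unfolding mpost_dens_def[abs_def] using assms(2) by measurable
qed

lemma mpost_prob:
  assumes "\<rho> \<in> borel_measurable borel" "\<pi> \<in> borel_measurable borel" "\<And>\<theta>. \<pi> \<theta> \<ge> 0"
    and N: "0 < mpost_norm \<rho> \<pi> Y" "mpost_norm \<rho> \<pi> Y < \<top>"
  shows "prob_space (mpost \<rho> \<pi> Y)" "sets (mpost \<rho> \<pi> Y) = sets borel"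
proof -
  define r where "r = enn2real (mpost_norm \<rho> \<pi> Y)"
  have Nr: "mpost_norm \<rho> \<pi> Y = ennreal r" "r > 0" using N unfolding r_def
    by (auto simp: enn2real_positive_iff less_top[symmetric])
  have fm: "mpost_dens \<rho> \<pi> Y \<in> borel_measurable borel" by (rule dens_meas[OF assms(1,2)])
  have f0: "mpost_dens \<rho> \<pi> Y \<theta> \<ge> 0" for \<theta> using assms(3) by (simp add: mpost_dens_def)
  have "emeasure (mpost \<rho> \<pi> Y) (space (mpost \<rho> \<pi> Y))
      = (\<integral>\<^sup>+ \<theta>. ennreal (mpost_dens \<rho> \<pi> Y \<theta> / r) \<partial>lborel)"
    unfolding mpost_def r_def[symmetric] using fm
    by (subst emeasure_density) auto
  also have "\<dots> = (\<integral>\<^sup>+ \<theta>. ennreal (mpost_dens \<rho> \<pi> Y \<theta>) * ennreal (1/r) \<partial>lborel)"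
    using Nr f0 by (intro nn_integral_cong) (simp add: ennreal_mult[symmetric])
  also have "\<dots> = mpost_norm \<rho> \<pi> Y * ennreal (1/r)"
    unfolding mpost_norm_def using fm by (subst nn_integral_multc) auto
  also have "\<dots> = 1" using Nr by (simp add: ennreal_mult[symmetric])
  finally show "prob_space (mpost \<rho> \<pi> Y)" by (rule prob_spaceI)
  show "sets (mpost \<rho> \<pi> Y) = sets borel" by (simp add: mpost_def)
qed


theorem mainTheorem16:
  fixes \<rho> \<pi> :: "real \<Rightarrow> real" and X :: "real list" and \<tau> :: real
  assumes "\<rho> \<in> borel_measurable borel"
    and "\<pi> \<in> borel_measurable borel"
    and "\<And>\<theta>. \<pi> \<theta> \<ge> 0"
    and "\<And>Y. length Y = length X \<Longrightarrow> 0 < mpost_norm \<rho> \<pi> Y \<and> mpost_norm \<rho> \<pi> Y < \<top>"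
    and "\<And>Y. length Y = length X \<Longrightarrow> (\<integral>\<^sup>+ \<theta>. ennreal (\<theta>\<^sup>2) \<partial>(mpost \<rho> \<pi> Y)) < \<top>"
    and "length X \<ge> 1"
    and "0 < \<tau>" and "\<tau> < 1"
  shows "breakdown (post_quantile \<rho> \<pi> \<tau>) X \<ge> post_breakdown_W2 \<rho> \<pi> X"
proof -
  define \<nu> where "\<nu> = mpost \<rho> \<pi> X"
  define T where "T = post_quantile \<rho> \<pi> \<tau>"
  have PY: "prob_space (mpost \<rho> \<pi> Y)" "sets (mpost \<rho> \<pi> Y) = sets borel"
    if "length Y = length X" for Y
    using mpost_prob[OF assms(1-3)] assms(4)[OF that] by auto
  have PX: "prob_space \<nu>" "sets \<nu> = sets borel" using PY[of X] by (auto simp: \<nu>_def)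
  interpret RD: real_distribution \<nu>
    using PX by (simp add: real_distribution_def real_distribution_axioms_def)
  have "\<forall>\<^sub>F x in at_bot. cdf \<nu> x < \<tau>"
    using order_tendstoD(2)[OF RD.cdf_lim_at_bot assms(7)] .
  then obtain a where a: "measure \<nu> {..a} < \<tau>"
    unfolding eventually_at_bot_linorder cdf_def by auto
  have "\<forall>\<^sub>F x in at_top. \<tau> < cdf \<nu> x"
    using order_tendstoD(1)[OF RD.cdf_lim_at_top_prob assms(8)] .
  then obtain c where c: "\<tau> < measure \<nu> {..c}"
    unfolding eventually_at_top_linorder cdf_def by auto
  have TX: "a \<le> T X" "T X \<le> c"
    using quant_in[OF PX a less_imp_le[OF c]] unfolding T_def post_quantile_def \<nu>_def by auto
  define \<delta> where "\<delta> = min (\<tau> - measure \<nu> {..a}) (measure \<nu> {..c} - \<tau>)"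
  have \<delta>: "\<delta> > 0" using a c by (simp add: \<delta>_def)
  have bound: "\<exists>K. \<forall>Y\<in>contam X m. \<bar>T Y - T X\<bar> \<le> K"
    if fin: "(SUP Y\<in>contam X m. W2 (mpost \<rho> \<pi> Y) \<nu>) \<noteq> \<top>" for m
  proof -
    define M where "M = (SUP Y\<in>contam X m. W2 (mpost \<rho> \<pi> Y) \<nu>)"
    define E where "E = (enn2real M)\<^sup>2 + 1"
    define t where "t = E / \<delta> + 1"
    have E0: "E > 0" by (simp add: E_def add_nonneg_pos)
    have "E / \<delta> > 0" using E0 \<delta> by simp
    then have t0: "t > 0" "t \<ge> 1" by (auto simp: t_def)
    have "E / \<delta> < t" by (simp add: t_def)
    also have "t \<le> t\<^sup>2" using t0 by (simp add: power2_eq_square)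
    finally have "E < \<delta> * t\<^sup>2" using \<delta> by (simp add: field_simps)
    then have Et: "E / t\<^sup>2 < \<delta>" using t0 by (simp add: field_simps)
    show ?thesis
    proof (intro exI ballI)
      fix Y assume Y: "Y \<in> contam X m"
      then have lY: "length Y = length X" by (simp add: contam_def)
      have "W2 (mpost \<rho> \<pi> Y) \<nu> \<le> M" unfolding M_def using Y by (rule SUP_upper)
      then have W2f: "W2 (mpost \<rho> \<pi> Y) \<nu> \<noteq> \<top>" and W2le: "enn2real (W2 (mpost \<rho> \<pi> Y) \<nu>) \<le> enn2real M"
        using fin unfolding M_def[symmetric] by (auto simp: top_unique enn2real_mono less_top)
      then have Wsqf: "W2sq (mpost \<rho> \<pi> Y) \<nu> \<noteq> \<top>" by (auto simp: W2_def)
      have "sqrt (enn2real (W2sq (mpost \<rho> \<pi> Y) \<nu>)) \<le> enn2real M"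
        using W2le Wsqf by (simp add: W2_def)
      then have "enn2real (W2sq (mpost \<rho> \<pi> Y) \<nu>) \<le> (enn2real M)\<^sup>2" by (rule sqrt_le_D)
      then have "W2sq (mpost \<rho> \<pi> Y) \<nu> < ennreal E" using Wsqf
        by (metis E_def ennreal_enn2real ennreal_lessI less_add_one less_top order_le_less_trans E0)
      then obtain \<gamma> where g: "\<gamma> \<in> couplings (mpost \<rho> \<pi> Y) \<nu>"
          and gE: "(\<integral>\<^sup>+ z. ennreal ((fst z - snd z)\<^sup>2) \<partial>\<gamma>) < ennreal E"
        unfolding W2sq_def INF_less_iff by auto
      note cf = coupling_facts[OF g less_imp_le[OF gE] t0(1) less_imp_le[OF E0]]
      have "measure (mpost \<rho> \<pi> Y) {..a - t} < \<tau>"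
        using cf(2)[of a] Et by (simp add: \<delta>_def)
      moreover have "\<tau> \<le> measure (mpost \<rho> \<pi> Y) {..c + t}"
        using cf(1)[of c] Et by (simp add: \<delta>_def)
      ultimately have "a - t \<le> T Y" "T Y \<le> c + t"
        using quant_in[OF PY[OF lY]] unfolding T_def post_quantile_def by auto
      then show "\<bar>T Y - T X\<bar> \<le> c - a + t" using TX by auto
    qed
  qed
  have sub: "{ereal (real m / real (length X)) | m. m \<le> length X \<and>
      (SUP Y\<in>contam X m. ereal \<bar>T Y - T X\<bar>) = \<infinity>}
    \<subseteq> {ereal (real m / real (length X)) | m. m \<le> length X \<and>
      (SUP Y\<in>contam X m. W2 (mpost \<rho> \<pi> Y) \<nu>) = \<top>}"
  proof clarify
    fix m assume m: "m \<le> length X" and inf: "(SUP Y\<in>contam X m. ereal \<bar>T Y - T X\<bar>) = \<infinity>"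
    have "(SUP Y\<in>contam X m. W2 (mpost \<rho> \<pi> Y) \<nu>) = \<top>"
    proof (rule ccontr)
      assume "(SUP Y\<in>contam X m. W2 (mpost \<rho> \<pi> Y) \<nu>) \<noteq> \<top>"
      then obtain K where K: "\<forall>Y\<in>contam X m. \<bar>T Y - T X\<bar> \<le> K" using bound by blast
      have "(SUP Y\<in>contam X m. ereal \<bar>T Y - T X\<bar>) \<le> ereal K"
        using K by (intro SUP_least) auto
      then show False using inf by simp
    qed
    then show "\<exists>m'. ereal (real m / real (length X)) = ereal (real m' / real (length X)) \<and> m' \<le> length X \<and>
      (SUP Y\<in>contam X m'. W2 (mpost \<rho> \<pi> Y) \<nu>) = \<top>" using m by blast
  qed
  show ?thesis unfolding breakdown_def post_breakdown_W2_def T_def[symmetric] \<nu>_def[symmetric]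
    by (rule Inf_superset_mono[OF sub])
qed

end
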